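(* Let $\Omega\subset\mathbb{R}^2$ be a bounded, simply connected domain with $C^{2+\epsilon}$ boundary, let $\lambda_j$ be any eigenvalue of $-\Delta$ on $\Omega$ with homogeneous Dirichlet boundary condition, with eigenfunction $\phi_j$, and set $P_+=\int_{\Omega_+}\phi_j\,dx$ and $P_-=-\int_{\Omega_-}\phi_j\,dx$, where $\Omega_\pm=\{x\in\Omega:\pm\phi_j(x)>0\}$. Consider $f(\varphi)=\lambda_j\varphi+\vartheta(\varphi)$ with $\vartheta\colon\mathbb{R}\to\mathbb{R}$ satisfying $0<A<\vartheta(\eta)<B$ for all $\eta$, for some constants $A,B$. If $P_+\neq P_-$, then for some ranges of $A$ and $B$ (i.e. there exist constants $0<A<B$ such that for every such $\vartheta$) the problem $-\Delta\varphi=f(\varphi)$ in $\Omega$, $\varphi=0$ on $\partial\Omega$, has no solution $\varphi\in H^1_0(\Omega)$ (with $f(\varphi)\in L^2(\Omega)$, the equation holding weakly). *)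

theory Defs
  imports "HOL-Analysis.Analysis"
begin

definition holder_on :: "real \<Rightarrow> real set \<Rightarrow> (real \<Rightarrow> real) \<Rightarrow> bool" where
  "holder_on \<alpha> S h \<longleftrightarrow> (\<exists>C. \<forall>x\<in>S. \<forall>y\<in>S. \<bar>h x - h y\<bar> \<le> C * \<bar>x - y\<bar> powr \<alpha>)"

text \<open>C^{2+eps} boundary: near every boundary point, after a rigid motion, the domain
  is the region above the graph of a C^2 function whose second derivative is
  eps-Hoelder continuous.\<close>
definition C2eps_boundary :: "real \<Rightarrow> (real^2) set \<Rightarrow> bool" where
  "C2eps_boundary \<epsilon> \<Omega> \<longleftrightarrow> 0 < \<epsilon> \<and> \<epsilon> < 1 \<and>
     (\<forall>p\<in>frontier \<Omega>. \<exists>r>0. \<exists>T g g' g''.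
        orthogonal_transformation (T :: real^2 \<Rightarrow> real^2) \<and>
        (\<forall>t. (g has_real_derivative g' t) (at t) \<and> (g' has_real_derivative g'' t) (at t)) \<and>
        continuous_on UNIV g'' \<and> holder_on \<epsilon> {-r..r} g'' \<and>
        (\<forall>x\<in>ball p r. x \<in> \<Omega> \<longleftrightarrow> (T (x - p)) $ 2 > g ((T (x - p)) $ 1)))"

text \<open>C^infinity functions on the plane: differentiable, with all partial
  derivatives (of all orders) again differentiable.\<close>
definition smooth_fun :: "(real^2 \<Rightarrow> real) \<Rightarrow> bool" where
  "smooth_fun f \<longleftrightarrow> (\<exists>F. F f \<and> (\<forall>h. F h \<longrightarrow>
       (\<forall>x. h differentiable (at x)) \<and>
       (\<forall>i. F (\<lambda>x. frechet_derivative h (at x) (axis i 1)))))"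

definition pderiv2 :: "(real^2 \<Rightarrow> real) \<Rightarrow> 2 \<Rightarrow> real^2 \<Rightarrow> real" where
  "pderiv2 f i x = frechet_derivative f (at x) (axis i 1)"

definition grad2 :: "(real^2 \<Rightarrow> real) \<Rightarrow> real^2 \<Rightarrow> real^2" where
  "grad2 f x = (\<chi> i. pderiv2 f i x)"

text \<open>Test functions C_c^infinity(Omega) (extended by zero to the plane).\<close>
definition test_fun :: "(real^2) set \<Rightarrow> (real^2 \<Rightarrow> real) \<Rightarrow> bool" where
  "test_fun \<Omega> \<psi> \<longleftrightarrow> smooth_fun \<psi> \<and> compact (closure {x. \<psi> x \<noteq> 0}) \<and>
     closure {x. \<psi> x \<noteq> 0} \<subseteq> \<Omega>"

definition L2_on :: "(real^2) set \<Rightarrow> (real^2 \<Rightarrow> real) \<Rightarrow> bool" where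
  "L2_on \<Omega> u \<longleftrightarrow> u \<in> borel_measurable (lebesgue_on \<Omega>) \<and>
     integrable (lebesgue_on \<Omega>) (\<lambda>x. (u x)^2)"

definition weak_gradient :: "(real^2) set \<Rightarrow> (real^2 \<Rightarrow> real) \<Rightarrow> (real^2 \<Rightarrow> real^2) \<Rightarrow> bool" where
  "weak_gradient \<Omega> u g \<longleftrightarrow> (\<forall>\<psi>. test_fun \<Omega> \<psi> \<longrightarrow> (\<forall>i.
      integral\<^sup>L (lebesgue_on \<Omega>) (\<lambda>x. u x * pderiv2 \<psi> i x) =
      - integral\<^sup>L (lebesgue_on \<Omega>) (\<lambda>x. g x $ i * \<psi> x)))"

definition H1_grad :: "(real^2) set \<Rightarrow> (real^2 \<Rightarrow> real) \<Rightarrow> (real^2 \<Rightarrow> real^2) \<Rightarrow> bool" where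
  "H1_grad \<Omega> u g \<longleftrightarrow> L2_on \<Omega> u \<and> (\<forall>i. L2_on \<Omega> (\<lambda>x. g x $ i)) \<and> weak_gradient \<Omega> u g"

text \<open>H^1_0(Omega): closure of C_c^infinity(Omega) in the H^1 norm.\<close>
definition H10 :: "(real^2) set \<Rightarrow> (real^2 \<Rightarrow> real) \<Rightarrow> bool" where
  "H10 \<Omega> u \<longleftrightarrow> (\<exists>g. H1_grad \<Omega> u g \<and>
     (\<exists>\<psi>::nat \<Rightarrow> real^2 \<Rightarrow> real. (\<forall>n. test_fun \<Omega> (\<psi> n)) \<and>
        (\<lambda>n. integral\<^sup>L (lebesgue_on \<Omega>) (\<lambda>x. (\<psi> n x - u x)^2)) \<longlonglongrightarrow> 0 \<and>
        (\<lambda>n. integral\<^sup>L (lebesgue_on \<Omega>) (\<lambda>x. (norm (grad2 (\<psi> n) x - g x))^2)) \<longlonglongrightarrow> 0))"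

definition dirichlet_weak_solution ::
  "(real^2) set \<Rightarrow> (real^2 \<Rightarrow> real) \<Rightarrow> (real^2 \<Rightarrow> real) \<Rightarrow> bool" where
  "dirichlet_weak_solution \<Omega> F u \<longleftrightarrow> H10 \<Omega> u \<and> L2_on \<Omega> F \<and>
     (\<exists>g. H1_grad \<Omega> u g \<and> (\<forall>v. test_fun \<Omega> v \<longrightarrow>
        integral\<^sup>L (lebesgue_on \<Omega>) (\<lambda>x. g x \<bullet> grad2 v x) =
        integral\<^sup>L (lebesgue_on \<Omega>) (\<lambda>x. F x * v x)))"

definition dirichlet_eigenpair :: "(real^2) set \<Rightarrow> real \<Rightarrow> (real^2 \<Rightarrow> real) \<Rightarrow> bool" where
  "dirichlet_eigenpair \<Omega> \<mu> \<phi> \<longleftrightarrow> dirichlet_weak_solution \<Omega> (\<lambda>x. \<mu> * \<phi> x) \<phi> \<and>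
     \<not> (AE x in lebesgue_on \<Omega>. \<phi> x = 0)"

end

theory Submission
  imports Defs
begin

lemma fin_leb_on:
  assumes "open \<Omega>" "bounded (\<Omega>::'a::euclidean_space set)"
  shows "finite_measure (lebesgue_on \<Omega>)"
proof -
  have "\<Omega> \<in> lmeasurable" using assms lmeasurable_open by blast
  then have "emeasure lebesgue \<Omega> < \<infinity>" unfolding fmeasurable_def by blast
  moreover have "\<Omega> \<in> sets lebesgue" using assms by (simp add: borel_open)
  moreover have "space (lebesgue_on \<Omega>) = \<Omega>" by (simp add: space_restrict_space)
  moreover have "emeasure (lebesgue_on \<Omega>) \<Omega> = emeasure lebesgue \<Omega>"
    using \<open>\<Omega> \<in> sets lebesgue\<close> by (simp add: emeasure_restrict_space)
  ultimately show ?thesis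
    by (intro finite_measureI) (metis less_irrefl top.not_eq_extremum)
qed

lemma L2_prod:
  fixes f g :: "'z \<Rightarrow> real"
  assumes "f \<in> borel_measurable M" "g \<in> borel_measurable M"
    "integrable M (\<lambda>x. (f x)^2)" "integrable M (\<lambda>x. (g x)^2)"
  shows "integrable M (\<lambda>x. f x * g x)"
proof (rule Bochner_Integration.integrable_bound[where f="\<lambda>x. ((f x)^2 + (g x)^2)/2"])
  show "integrable M (\<lambda>x. ((f x)^2 + (g x)^2)/2)" using assms by auto
  show "(\<lambda>x. f x * g x) \<in> borel_measurable M" using assms by measurable
  show "AE x in M. norm (f x * g x) \<le> norm (((f x)^2 + (g x)^2)/2)"
  proof (rule AE_I2)
    fix x
    have "\<bar>f x * g x\<bar> \<le> ((f x)^2 + (g x)^2)/2"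
    proof -
      have "0 \<le> (\<bar>f x\<bar> - \<bar>g x\<bar>)^2" by simp
      then have "2 * (\<bar>f x\<bar> * \<bar>g x\<bar>) \<le> \<bar>f x\<bar>^2 + \<bar>g x\<bar>^2"
        by (simp add: power2_diff)
      then show ?thesis by (simp add: abs_mult)
    qed
    then show "norm (f x * g x) \<le> norm (((f x)^2 + (g x)^2)/2)" by simp
  qed
qed

lemma bdd_L2:
  fixes f :: "'z \<Rightarrow> real"
  assumes "finite_measure M" "f \<in> borel_measurable M" "\<And>x. \<bar>f x\<bar> \<le> C"
  shows "integrable M (\<lambda>x. (f x)^2)"
proof -
  interpret finite_measure M by fact
  show ?thesis
  proof (rule integrable_const_bound[where B="C^2"])
    show "AE x in M. norm ((f x)^2) \<le> C^2"
      using assms(3) by (auto intro!: AE_I2 simp: abs_le_square_iff)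
       (metis abs_ge_zero power2_abs power_mono)
  qed (use assms in auto)
qed

lemma L2_integrable:
  fixes f :: "'z \<Rightarrow> real"
  assumes "finite_measure M" "f \<in> borel_measurable M" "integrable M (\<lambda>x. (f x)^2)"
  shows "integrable M f"
proof -
  have "integrable M (\<lambda>x. f x * 1)"
    using assms by (intro L2_prod) (auto intro: finite_measure.integrable_const)
  then show ?thesis by simp
qed

lemma amgm_t:
  fixes x y t :: real assumes "t > 0"
  shows "x * y \<le> (t * x^2 + y^2 / t) / 2"
proof -
  have "0 \<le> (t*x - y)^2" by simp
  then have "2*t*(x*y) \<le> t^2*x^2 + y^2" by (simp add: power2_diff power_mult_distrib algebra_simps)
  then have "t*(2*(x*y)) \<le> t*(t*x^2 + y^2/t)" using assms
    by (simp add: algebra_simps power2_eq_square)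
  then show ?thesis using assms by simp
qed

lemma inner_conv:
  fixes a b :: "'z \<Rightarrow> 'v::real_inner" and c :: "nat \<Rightarrow> 'z \<Rightarrow> 'v"
  assumes ia: "integrable M (\<lambda>x. (norm (a x))^2)"
    and iq: "\<And>n. integrable M (\<lambda>x. (norm (c n x - b x))^2)"
    and lq: "(\<lambda>n. integral\<^sup>L M (\<lambda>x. (norm (c n x - b x))^2)) \<longlonglongrightarrow> 0"
    and ic: "\<And>n. integrable M (\<lambda>x. inner (a x) (c n x))"
    and ib: "integrable M (\<lambda>x. inner (a x) (b x))"
  shows "(\<lambda>n. integral\<^sup>L M (\<lambda>x. inner (a x) (c n x))) \<longlonglongrightarrow> integral\<^sup>L M (\<lambda>x. inner (a x) (b x))"
proof -
  define K where "K = integral\<^sup>L M (\<lambda>x. (norm (a x))^2)"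
  define Q where "Q n = integral\<^sup>L M (\<lambda>x. (norm (c n x - b x))^2)" for n
  have K0: "K \<ge> 0" unfolding K_def by (rule integral_nonneg_AE) auto
  have bound: "\<bar>integral\<^sup>L M (\<lambda>x. inner (a x) (c n x)) - integral\<^sup>L M (\<lambda>x. inner (a x) (b x))\<bar>
      \<le> (t * K + Q n / t) / 2" if t: "t > 0" for n t
  proof -
    have id: "(\<lambda>x. inner (a x) (c n x - b x)) = (\<lambda>x. inner (a x) (c n x) - inner (a x) (b x))"
      by (simp add: inner_diff_right)
    have int_d: "integrable M (\<lambda>x. inner (a x) (c n x - b x))"
      unfolding id using ic ib by auto
    have "integral\<^sup>L M (\<lambda>x. inner (a x) (c n x)) - integral\<^sup>L M (\<lambda>x. inner (a x) (b x))
       = integral\<^sup>L M (\<lambda>x. inner (a x) (c n x - b x))"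
      unfolding id using ic ib by (simp add: Bochner_Integration.integral_diff)
    also have "\<bar>\<dots>\<bar> \<le> integral\<^sup>L M (\<lambda>x. \<bar>inner (a x) (c n x - b x)\<bar>)"
      by (rule integral_abs_bound)
    also have "\<dots> \<le> integral\<^sup>L M (\<lambda>x. (t * (norm (a x))^2 + (norm (c n x - b x))^2 / t) / 2)"
    proof (rule integral_mono)
      show "integrable M (\<lambda>x. \<bar>inner (a x) (c n x - b x)\<bar>)" using int_d by auto
      show "integrable M (\<lambda>x. (t * (norm (a x))^2 + (norm (c n x - b x))^2 / t) / 2)"
        using ia iq by auto
      fix x
      have "\<bar>inner (a x) (c n x - b x)\<bar> \<le> norm (a x) * norm (c n x - b x)"
        by (rule Cauchy_Schwarz_ineq2)
      also have "\<dots> \<le> (t * (norm (a x))^2 + (norm (c n x - b x))^2 / t) / 2"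
        by (rule amgm_t[OF t])
      finally show "\<bar>inner (a x) (c n x - b x)\<bar> \<le> (t * (norm (a x))^2 + (norm (c n x - b x))^2 / t) / 2" .
    qed
    also have "\<dots> = (t * K + Q n / t) / 2"
      unfolding K_def Q_def using ia iq by simp
    finally show ?thesis .
  qed
  show ?thesis
  proof (rule LIMSEQ_I)
    fix r :: real assume r: "r > 0"
    define t where "t = r / (K + 1)"
    have t: "t > 0" using r K0 by (simp add: t_def)
    have tK: "t * K < r" using r K0 unfolding t_def by (simp add: field_simps)
    have "Q \<longlonglongrightarrow> 0" using lq unfolding Q_def .
    then obtain N where N: "\<And>n. n \<ge> N \<Longrightarrow> norm (Q n - 0) < t * r"
      using LIMSEQ_D[of Q 0 "t*r"] t r by auto
    show "\<exists>no. \<forall>n\<ge>no. norm (integral\<^sup>L M (\<lambda>x. inner (a x) (c n x)) - integral\<^sup>L M (\<lambda>x. inner (a x) (b x))) < r"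
    proof (intro exI allI impI)
      fix n assume "n \<ge> N"
      then have "Q n < t * r" using N[of n] by simp
      then have "Q n / t < r" using t by (simp add: field_simps)
      then have "(t * K + Q n / t) / 2 < r" using tK by simp
      then show "norm (integral\<^sup>L M (\<lambda>x. inner (a x) (c n x)) - integral\<^sup>L M (\<lambda>x. inner (a x) (b x))) < r"
        using bound[OF t, of n] by simp
    qed
  qed
qed

lemma smooth_diff: "smooth_fun h \<Longrightarrow> h differentiable (at x)"
  unfolding smooth_fun_def by blast

lemma smooth_cont: "smooth_fun h \<Longrightarrow> continuous_on UNIV h"
  by (rule continuous_at_imp_continuous_on) (auto intro: differentiable_imp_continuous_within smooth_diff)

lemma smooth_pderiv: "smooth_fun h \<Longrightarrow> smooth_fun (pderiv2 h i)"
proof -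
  assume "smooth_fun h"
  then obtain F where F: "F h" "\<forall>h. F h \<longrightarrow> (\<forall>x. h differentiable (at x)) \<and>
       (\<forall>i. F (\<lambda>x. frechet_derivative h (at x) (axis i 1)))"
    unfolding smooth_fun_def by blast
  have "pderiv2 h i = (\<lambda>x. frechet_derivative h (at x) (axis i 1))"
    by (simp add: pderiv2_def fun_eq_iff)
  then have "F (pderiv2 h i)" using F by simp
  then show ?thesis unfolding smooth_fun_def using F(2) by blast
qed

lemma pderiv_outside:
  assumes "smooth_fun h" "x \<notin> closure {x. h x \<noteq> 0}"
  shows "pderiv2 h i x = 0"
proof -
  define U where "U = - closure {x. h x \<noteq> 0}"
  have oU: "open U" unfolding U_def by (intro open_Compl closed_closure)
  have xU: "x \<in> U" unfolding U_def Compl_iff by (rule assms(2))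
  have z: "\<And>y. y \<in> U \<Longrightarrow> 0 = h y"
  proof -
    fix y assume "y \<in> U"
    then have "y \<notin> closure {x. h x \<noteq> 0}" unfolding U_def by (rule ComplD)
    then have "y \<notin> {x. h x \<noteq> 0}" by (rule contra_subsetD[OF closure_subset])
    then show "0 = h y" by simp
  qed
  have d0: "((\<lambda>_. 0::real) has_derivative (\<lambda>_. 0)) (at x)" by (rule has_derivative_const)
  have "(h has_derivative (\<lambda>_. 0)) (at x)"
    using has_derivative_transform_within_open[OF d0 oU xU, of h] z by blast
  then have "(\<lambda>_. 0) = frechet_derivative h (at x)"
    by (rule frechet_derivative_at)
  then show ?thesis unfolding pderiv2_def by (metis)
qed


lemma test_pderiv:
  assumes "test_fun \<Omega> \<psi>"
  shows "test_fun \<Omega> (pderiv2 \<psi> i)"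
proof -
  have sm: "smooth_fun \<psi>" and cp: "compact (closure {x. \<psi> x \<noteq> 0})"
    and sub: "closure {x. \<psi> x \<noteq> 0} \<subseteq> \<Omega>"
    using assms unfolding test_fun_def by auto
  have "{x. pderiv2 \<psi> i x \<noteq> 0} \<subseteq> closure {x. \<psi> x \<noteq> 0}"
  proof (rule subsetI)
    fix x assume x: "x \<in> {x. pderiv2 \<psi> i x \<noteq> 0}"
    show "x \<in> closure {x. \<psi> x \<noteq> 0}"
    proof (rule ccontr)
      assume "x \<notin> closure {x. \<psi> x \<noteq> 0}"
      from pderiv_outside[OF sm this] have "pderiv2 \<psi> i x = 0" .
      with x show False unfolding mem_Collect_eq by (rule notE)
    qed
  qed
  then have cs: "closure {x. pderiv2 \<psi> i x \<noteq> 0} \<subseteq> closure {x. \<psi> x \<noteq> 0}"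
    by (rule closure_minimal) (rule closed_closure)
  have "compact (closure {x. \<psi> x \<noteq> 0} \<inter> closure {x. pderiv2 \<psi> i x \<noteq> 0})"
    by (rule compact_Int_closed[OF cp]) simp
  then have "compact (closure {x. pderiv2 \<psi> i x \<noteq> 0})"
    using cs by (simp add: Int_absorb1)
  then show ?thesis unfolding test_fun_def using smooth_pderiv[OF sm] cs sub by (blast intro: order.trans)
qed

lemma cont_cpt_bounded:
  fixes h :: "'a::real_normed_vector \<Rightarrow> real"
  assumes "continuous_on UNIV h" "compact (closure {x. h x \<noteq> 0})"
  shows "\<exists>C. \<forall>x. \<bar>h x\<bar> \<le> C"
proof -
  let ?K = "closure {x. h x \<noteq> 0}"
  have "compact (h ` ?K)"
    using assms by (meson compact_continuous_image continuous_on_subset subset_UNIV)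
  then have "bounded (h ` ?K)" by (rule compact_imp_bounded)
  then obtain C where C: "\<And>y. y \<in> h ` ?K \<Longrightarrow> norm y \<le> C"
    unfolding bounded_iff by blast
  show ?thesis
  proof (intro exI allI)
    fix x
    show "\<bar>h x\<bar> \<le> max C 0"
    proof (cases "h x = 0")
      case False
      then have "x \<in> {x. h x \<noteq> 0}" unfolding mem_Collect_eq .
      then have "x \<in> ?K" by (rule closure_subset[THEN subsetD])
      then show ?thesis using C[of "h x"] by auto
    qed simp
  qed
qed

lemma test_props:
  assumes "test_fun \<Omega> \<psi>" "open \<Omega>"
  shows "\<psi> \<in> borel_measurable (lebesgue_on \<Omega>)" "\<exists>C. \<forall>x. \<bar>\<psi> x\<bar> \<le> C"
proof -
  have sm: "smooth_fun \<psi>" and cp: "compact (closure {x. \<psi> x \<noteq> 0})"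
    using assms unfolding test_fun_def by auto
  show "\<psi> \<in> borel_measurable (lebesgue_on \<Omega>)"
  proof (rule continuous_imp_measurable_on_sets_lebesgue)
    show "continuous_on \<Omega> \<psi>" using smooth_cont[OF sm] by (rule continuous_on_subset) simp
    show "\<Omega> \<in> sets lebesgue" using assms(2) by (simp add: borel_open)
  qed
  show "\<exists>C. \<forall>x. \<bar>\<psi> x\<bar> \<le> C" using cont_cpt_bounded[OF smooth_cont[OF sm] cp] .
qed

lemma L2_diff:
  fixes f g :: "'z \<Rightarrow> real"
  assumes "f \<in> borel_measurable M" "g \<in> borel_measurable M"
    "integrable M (\<lambda>x. (f x)^2)" "integrable M (\<lambda>x. (g x)^2)"
  shows "integrable M (\<lambda>x. (f x - g x)^2)"
proof -
  have "integrable M (\<lambda>x. f x * g x)" using L2_prod[OF assms] .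
  then have "integrable M (\<lambda>x. (f x)^2 - 2 * (f x * g x) + (g x)^2)"
    using assms by auto
  moreover have "(\<lambda>x. (f x - g x)^2) = (\<lambda>x. (f x)^2 - 2 * (f x * g x) + (g x)^2)"
    by (simp add: fun_eq_iff power2_diff mult.assoc)
  ultimately show ?thesis by simp
qed

lemma inner2_expand: "inner (a::real^2) b = (\<Sum>i\<in>UNIV. a $ i * b $ i)"
  by (simp add: inner_vec_def)

lemma norm2_expand: "(norm (a::real^2))^2 = (\<Sum>i\<in>UNIV. (a $ i)^2)"
proof -
  have "(norm a)^2 = inner a a" by (rule power2_norm_eq_inner)
  also have "\<dots> = (\<Sum>i\<in>UNIV. a $ i * a $ i)" by (rule inner2_expand)
  also have "\<dots> = (\<Sum>i\<in>UNIV. (a $ i)^2)" by (simp add: power2_eq_square)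
  finally show ?thesis .
qed

lemma grad2_nth: "grad2 f x $ i = pderiv2 f i x"
  by (simp add: grad2_def)

context
  fixes \<Omega> :: "(real^2) set"
  assumes op: "open \<Omega>" and bd: "bounded \<Omega>"
begin

lemma fm: "finite_measure (lebesgue_on \<Omega>)" using fin_leb_on[OF op bd] .

lemma test_L2:
  assumes "test_fun \<Omega> \<psi>"
  shows "\<psi> \<in> borel_measurable (lebesgue_on \<Omega>)" "integrable (lebesgue_on \<Omega>) (\<lambda>x. (\<psi> x)^2)"
proof -
  show m: "\<psi> \<in> borel_measurable (lebesgue_on \<Omega>)" using test_props[OF assms op] by blast
  obtain C where "\<forall>x. \<bar>\<psi> x\<bar> \<le> C" using test_props[OF assms op] by blast
  then show "integrable (lebesgue_on \<Omega>) (\<lambda>x. (\<psi> x)^2)" using bdd_L2[OF fm m] by blast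
qed

lemma test_pd_L2:
  assumes "test_fun \<Omega> \<psi>"
  shows "pderiv2 \<psi> i \<in> borel_measurable (lebesgue_on \<Omega>)"
     "integrable (lebesgue_on \<Omega>) (\<lambda>x. (pderiv2 \<psi> i x)^2)"
  using test_L2[OF test_pderiv[OF assms]] by auto

lemma vecL2_norm:
  fixes g h :: "real^2 \<Rightarrow> real^2"
  assumes "\<forall>i. L2_on \<Omega> (\<lambda>x. g x $ i)"
  shows "integrable (lebesgue_on \<Omega>) (\<lambda>x. (norm (g x))^2)"
  unfolding norm2_expand using assms unfolding L2_on_def
  by (intro Bochner_Integration.integrable_sum) auto

lemma vecL2_inner:
  fixes g h :: "real^2 \<Rightarrow> real^2"
  assumes "\<forall>i. L2_on \<Omega> (\<lambda>x. g x $ i)" "\<forall>i. L2_on \<Omega> (\<lambda>x. h x $ i)"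
  shows "integrable (lebesgue_on \<Omega>) (\<lambda>x. inner (g x) (h x))"
  unfolding inner2_expand using assms unfolding L2_on_def
  by (intro Bochner_Integration.integrable_sum L2_prod) auto

lemma grad_L2:
  assumes "test_fun \<Omega> \<psi>"
  shows "\<forall>i. L2_on \<Omega> (\<lambda>x. grad2 \<psi> x $ i)"
  unfolding grad2_nth L2_on_def using test_pd_L2[OF assms] by auto

lemma diff_L2:
  fixes g h :: "real^2 \<Rightarrow> real^2"
  assumes "\<forall>i. L2_on \<Omega> (\<lambda>x. g x $ i)" "\<forall>i. L2_on \<Omega> (\<lambda>x. h x $ i)"
  shows "\<forall>i. L2_on \<Omega> (\<lambda>x. (g x - h x) $ i)"
  using assms unfolding L2_on_def by (auto intro: L2_diff borel_measurable_diff)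

lemma weak_pair:
  fixes g :: "real^2 \<Rightarrow> real^2"
  assumes "H1_grad \<Omega> w g" "test_fun \<Omega> \<psi>"
  shows "integral\<^sup>L (lebesgue_on \<Omega>) (\<lambda>x. inner (g x) (grad2 \<psi> x)) =
    - (\<Sum>i\<in>UNIV. integral\<^sup>L (lebesgue_on \<Omega>) (\<lambda>x. w x * pderiv2 (pderiv2 \<psi> i) i x))"
proof -
  have gL: "\<forall>i. L2_on \<Omega> (\<lambda>x. g x $ i)" and wg: "weak_gradient \<Omega> w g"
    using assms(1) unfolding H1_grad_def by auto
  have int: "integrable (lebesgue_on \<Omega>) (\<lambda>x. g x $ i * pderiv2 \<psi> i x)" for i
    using gL test_pd_L2[OF assms(2), of i] unfolding L2_on_def by (intro L2_prod) auto
  have "integral\<^sup>L (lebesgue_on \<Omega>) (\<lambda>x. inner (g x) (grad2 \<psi> x)) =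
     integral\<^sup>L (lebesgue_on \<Omega>) (\<lambda>x. \<Sum>i\<in>UNIV. g x $ i * pderiv2 \<psi> i x)"
    by (simp add: inner2_expand grad2_nth)
  also have "\<dots> = (\<Sum>i\<in>UNIV. integral\<^sup>L (lebesgue_on \<Omega>) (\<lambda>x. g x $ i * pderiv2 \<psi> i x))"
    by (rule Bochner_Integration.integral_sum) (rule int)
  also have "\<dots> = (\<Sum>i\<in>UNIV. - integral\<^sup>L (lebesgue_on \<Omega>) (\<lambda>x. w x * pderiv2 (pderiv2 \<psi> i) i x))"
  proof (rule sum.cong[OF refl])
    fix i
    have "test_fun \<Omega> (pderiv2 \<psi> i)" by (rule test_pderiv[OF assms(2)])
    then have "integral\<^sup>L (lebesgue_on \<Omega>) (\<lambda>x. w x * pderiv2 (pderiv2 \<psi> i) i x) =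
      - integral\<^sup>L (lebesgue_on \<Omega>) (\<lambda>x. g x $ i * pderiv2 \<psi> i x)"
      using wg unfolding weak_gradient_def by blast
    then show "integral\<^sup>L (lebesgue_on \<Omega>) (\<lambda>x. g x $ i * pderiv2 \<psi> i x) =
      - integral\<^sup>L (lebesgue_on \<Omega>) (\<lambda>x. w x * pderiv2 (pderiv2 \<psi> i) i x)" by simp
  qed
  also have "\<dots> = - (\<Sum>i\<in>UNIV. integral\<^sup>L (lebesgue_on \<Omega>) (\<lambda>x. w x * pderiv2 (pderiv2 \<psi> i) i x))"
    by (simp add: sum_negf)
  finally show ?thesis .
qed

lemma weak_pair_eq:
  fixes g g' :: "real^2 \<Rightarrow> real^2"
  assumes "H1_grad \<Omega> w g" "H1_grad \<Omega> w g'" "test_fun \<Omega> \<psi>"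
  shows "integral\<^sup>L (lebesgue_on \<Omega>) (\<lambda>x. inner (g x) (grad2 \<psi> x)) =
         integral\<^sup>L (lebesgue_on \<Omega>) (\<lambda>x. inner (g' x) (grad2 \<psi> x))"
  using weak_pair[OF assms(1,3)] weak_pair[OF assms(2,3)] by simp

end

context
  fixes \<Omega> :: "(real^2) set"
  assumes op: "open \<Omega>" and bd: "bounded \<Omega>"
begin

lemma grad_limit:
  fixes G Gv :: "real^2 \<Rightarrow> real^2"
  assumes "\<forall>i. L2_on \<Omega> (\<lambda>x. G x $ i)" "\<forall>i. L2_on \<Omega> (\<lambda>x. Gv x $ i)"
    "\<And>n. test_fun \<Omega> (\<psi> n)"
    "(\<lambda>n. integral\<^sup>L (lebesgue_on \<Omega>) (\<lambda>x. (norm (grad2 (\<psi> n) x - G x))^2)) \<longlonglongrightarrow> 0"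
  shows "(\<lambda>n. integral\<^sup>L (lebesgue_on \<Omega>) (\<lambda>x. inner (Gv x) (grad2 (\<psi> n) x)))
     \<longlonglongrightarrow> integral\<^sup>L (lebesgue_on \<Omega>) (\<lambda>x. inner (Gv x) (G x))"
proof (rule inner_conv)
  show "integrable (lebesgue_on \<Omega>) (\<lambda>x. (norm (Gv x))^2)"
    by (rule vecL2_norm[OF op bd assms(2)])
  show "integrable (lebesgue_on \<Omega>) (\<lambda>x. (norm (grad2 (\<psi> n) x - G x))^2)" for n
    by (rule vecL2_norm[OF op bd diff_L2[OF op bd grad_L2[OF op bd assms(3)] assms(1)]])
  show "integrable (lebesgue_on \<Omega>) (\<lambda>x. inner (Gv x) (grad2 (\<psi> n) x))" for n
    by (rule vecL2_inner[OF op bd assms(2) grad_L2[OF op bd assms(3)]])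
  show "integrable (lebesgue_on \<Omega>) (\<lambda>x. inner (Gv x) (G x))"
    by (rule vecL2_inner[OF op bd assms(2,1)])
qed (rule assms(4))

lemma fun_limit:
  fixes a w :: "real^2 \<Rightarrow> real"
  assumes "L2_on \<Omega> a" "L2_on \<Omega> w" "\<And>n. test_fun \<Omega> (\<psi> n)"
    "(\<lambda>n. integral\<^sup>L (lebesgue_on \<Omega>) (\<lambda>x. (\<psi> n x - w x)^2)) \<longlonglongrightarrow> 0"
  shows "(\<lambda>n. integral\<^sup>L (lebesgue_on \<Omega>) (\<lambda>x. a x * \<psi> n x))
     \<longlonglongrightarrow> integral\<^sup>L (lebesgue_on \<Omega>) (\<lambda>x. a x * w x)"
proof -
  have t: "\<psi> n \<in> borel_measurable (lebesgue_on \<Omega>)" "integrable (lebesgue_on \<Omega>) (\<lambda>x. (\<psi> n x)^2)" for n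
    using test_L2[OF op bd assms(3)] by auto
  have "(\<lambda>n. integral\<^sup>L (lebesgue_on \<Omega>) (\<lambda>x. inner (a x) (\<psi> n x)))
     \<longlonglongrightarrow> integral\<^sup>L (lebesgue_on \<Omega>) (\<lambda>x. inner (a x) (w x))"
  proof (rule inner_conv)
    show "integrable (lebesgue_on \<Omega>) (\<lambda>x. (norm (a x))^2)"
      using assms(1) unfolding L2_on_def by simp
    show "integrable (lebesgue_on \<Omega>) (\<lambda>x. (norm (\<psi> n x - w x))^2)" for n
      using L2_diff[OF t(1) _ t(2), of w] assms(2) unfolding L2_on_def by simp
    show "(\<lambda>n. integral\<^sup>L (lebesgue_on \<Omega>) (\<lambda>x. (norm (\<psi> n x - w x))^2)) \<longlonglongrightarrow> 0"
      using assms(4) by simp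
    show "integrable (lebesgue_on \<Omega>) (\<lambda>x. inner (a x) (\<psi> n x))" for n
      using L2_prod[of a _ "\<psi> n"] t assms(1) unfolding L2_on_def by simp
    show "integrable (lebesgue_on \<Omega>) (\<lambda>x. inner (a x) (w x))"
      using L2_prod[of a _ w] assms(1,2) unfolding L2_on_def by simp
  qed
  then show ?thesis by simp
qed

lemma fredholm:
  assumes sol: "dirichlet_weak_solution \<Omega> F u"
    and eig: "dirichlet_weak_solution \<Omega> (\<lambda>x. lam * \<phi> x) \<phi>"
  shows "integral\<^sup>L (lebesgue_on \<Omega>) (\<lambda>x. F x * \<phi> x) =
         lam * integral\<^sup>L (lebesgue_on \<Omega>) (\<lambda>x. \<phi> x * u x)"
proof -
  from sol obtain Gu \<psi> where HGu: "H1_grad \<Omega> u Gu" and t\<psi>: "\<And>n. test_fun \<Omega> (\<psi> n)"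
    and c1u: "(\<lambda>n. integral\<^sup>L (lebesgue_on \<Omega>) (\<lambda>x. (\<psi> n x - u x)^2)) \<longlonglongrightarrow> 0"
    and c2u: "(\<lambda>n. integral\<^sup>L (lebesgue_on \<Omega>) (\<lambda>x. (norm (grad2 (\<psi> n) x - Gu x))^2)) \<longlonglongrightarrow> 0"
    unfolding dirichlet_weak_solution_def H10_def by blast
  from sol obtain gu where Hgu: "H1_grad \<Omega> u gu" and eqU: "\<And>v. test_fun \<Omega> v \<Longrightarrow>
        integral\<^sup>L (lebesgue_on \<Omega>) (\<lambda>x. gu x \<bullet> grad2 v x) =
        integral\<^sup>L (lebesgue_on \<Omega>) (\<lambda>x. F x * v x)"
    and LF: "L2_on \<Omega> F"
    unfolding dirichlet_weak_solution_def by blast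
  from eig obtain Gj ch where HGj: "H1_grad \<Omega> \<phi> Gj" and tch: "\<And>n. test_fun \<Omega> (ch n)"
    and c1j: "(\<lambda>n. integral\<^sup>L (lebesgue_on \<Omega>) (\<lambda>x. (ch n x - \<phi> x)^2)) \<longlonglongrightarrow> 0"
    and c2j: "(\<lambda>n. integral\<^sup>L (lebesgue_on \<Omega>) (\<lambda>x. (norm (grad2 (ch n) x - Gj x))^2)) \<longlonglongrightarrow> 0"
    unfolding dirichlet_weak_solution_def H10_def by blast
  from eig obtain gj where Hgj: "H1_grad \<Omega> \<phi> gj" and eqJ: "\<And>v. test_fun \<Omega> v \<Longrightarrow>
        integral\<^sup>L (lebesgue_on \<Omega>) (\<lambda>x. gj x \<bullet> grad2 v x) =
        integral\<^sup>L (lebesgue_on \<Omega>) (\<lambda>x. lam * \<phi> x * v x)"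
    unfolding dirichlet_weak_solution_def by blast
  have LGu: "\<forall>i. L2_on \<Omega> (\<lambda>x. Gu x $ i)" and Lu: "L2_on \<Omega> u"
    using HGu unfolding H1_grad_def by auto
  have LGj: "\<forall>i. L2_on \<Omega> (\<lambda>x. Gj x $ i)" and Lphi: "L2_on \<Omega> \<phi>"
    using HGj unfolding H1_grad_def by auto
  have lim1: "(\<lambda>n. integral\<^sup>L (lebesgue_on \<Omega>) (\<lambda>x. inner (Gj x) (grad2 (\<psi> n) x)))
     \<longlonglongrightarrow> integral\<^sup>L (lebesgue_on \<Omega>) (\<lambda>x. inner (Gj x) (Gu x))"
    by (rule grad_limit[OF LGu LGj t\<psi> c2u])
  have e1: "integral\<^sup>L (lebesgue_on \<Omega>) (\<lambda>x. inner (Gj x) (grad2 (\<psi> n) x))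
      = lam * integral\<^sup>L (lebesgue_on \<Omega>) (\<lambda>x. \<phi> x * \<psi> n x)" for n
  proof -
    have "integral\<^sup>L (lebesgue_on \<Omega>) (\<lambda>x. inner (Gj x) (grad2 (\<psi> n) x))
        = integral\<^sup>L (lebesgue_on \<Omega>) (\<lambda>x. inner (gj x) (grad2 (\<psi> n) x))"
      by (rule weak_pair_eq[OF op bd HGj Hgj t\<psi>])
    also have "\<dots> = integral\<^sup>L (lebesgue_on \<Omega>) (\<lambda>x. lam * (\<phi> x * \<psi> n x))"
      using eqJ[OF t\<psi>] by (simp add: mult.assoc)
    also have "\<dots> = lam * integral\<^sup>L (lebesgue_on \<Omega>) (\<lambda>x. \<phi> x * \<psi> n x)"
      by simp
    finally show ?thesis .
  qed
  have lim1': "(\<lambda>n. lam * integral\<^sup>L (lebesgue_on \<Omega>) (\<lambda>x. \<phi> x * \<psi> n x))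
     \<longlonglongrightarrow> lam * integral\<^sup>L (lebesgue_on \<Omega>) (\<lambda>x. \<phi> x * u x)"
    by (intro tendsto_mult_left fun_limit[OF Lphi Lu t\<psi> c1u])
  have E1: "integral\<^sup>L (lebesgue_on \<Omega>) (\<lambda>x. inner (Gj x) (Gu x)) =
      lam * integral\<^sup>L (lebesgue_on \<Omega>) (\<lambda>x. \<phi> x * u x)"
    using lim1 lim1' e1 LIMSEQ_unique by auto
  have lim2: "(\<lambda>n. integral\<^sup>L (lebesgue_on \<Omega>) (\<lambda>x. inner (Gu x) (grad2 (ch n) x)))
     \<longlonglongrightarrow> integral\<^sup>L (lebesgue_on \<Omega>) (\<lambda>x. inner (Gu x) (Gj x))"
    by (rule grad_limit[OF LGj LGu tch c2j])
  have e2: "integral\<^sup>L (lebesgue_on \<Omega>) (\<lambda>x. inner (Gu x) (grad2 (ch n) x))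
      = integral\<^sup>L (lebesgue_on \<Omega>) (\<lambda>x. F x * ch n x)" for n
  proof -
    have "integral\<^sup>L (lebesgue_on \<Omega>) (\<lambda>x. inner (Gu x) (grad2 (ch n) x))
        = integral\<^sup>L (lebesgue_on \<Omega>) (\<lambda>x. inner (gu x) (grad2 (ch n) x))"
      by (rule weak_pair_eq[OF op bd HGu Hgu tch])
    also have "\<dots> = integral\<^sup>L (lebesgue_on \<Omega>) (\<lambda>x. F x * ch n x)"
      using eqU[OF tch] by simp
    finally show ?thesis .
  qed
  have lim2': "(\<lambda>n. integral\<^sup>L (lebesgue_on \<Omega>) (\<lambda>x. F x * ch n x))
     \<longlonglongrightarrow> integral\<^sup>L (lebesgue_on \<Omega>) (\<lambda>x. F x * \<phi> x)"
    by (rule fun_limit[OF LF Lphi tch c1j])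
  have E2: "integral\<^sup>L (lebesgue_on \<Omega>) (\<lambda>x. inner (Gu x) (Gj x)) =
      integral\<^sup>L (lebesgue_on \<Omega>) (\<lambda>x. F x * \<phi> x)"
    using lim2 lim2' e2 LIMSEQ_unique by auto
  show ?thesis using E1 E2 by (simp add: inner_commute)
qed

end

lemma arithAB:
  fixes x y :: real assumes "0 \<le> y" "y < x"
  shows "(1 + (x - y) / (x + 1)) * y < x" "1 < 1 + (x - y) / (x + 1)"
proof -
  have xp: "x + 1 > 0" using assms by simp
  have "(x - y) * y < (x - y) * (x + 1)"
    using assms by (intro mult_strict_left_mono) auto
  then have "(x - y) * y / (x + 1) < x - y" using xp by (simp add: field_simps)
  then show "(1 + (x - y) / (x + 1)) * y < x" by (simp add: algebra_simps)
  show "1 < 1 + (x - y) / (x + 1)" using assms xp by simp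
qed

lemma restrict_int:
  fixes f :: "'a::euclidean_space \<Rightarrow> real"
  assumes "S \<subseteq> \<Omega>" "S \<in> sets lebesgue" "\<Omega> \<in> sets lebesgue"
  shows "integral\<^sup>L (lebesgue_on S) f = integral\<^sup>L (lebesgue_on \<Omega>) (\<lambda>x. indicator S x * f x)"
proof -
  have "integral\<^sup>L (lebesgue_on S) f = integral\<^sup>L lebesgue (\<lambda>x. indicator S x *\<^sub>R f x)"
    using assms by (intro integral_restrict_space) simp
  also have "\<dots> = integral\<^sup>L lebesgue (\<lambda>x. indicator \<Omega> x *\<^sub>R (indicator S x * f x))"
    using assms(1) by (intro Bochner_Integration.integral_cong) (auto simp: indicator_def)
  also have "\<dots> = integral\<^sup>L (lebesgue_on \<Omega>) (\<lambda>x. indicator S x * f x)"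
    using assms by (intro integral_restrict_space[symmetric]) simp
  finally show ?thesis .
qed

lemma bmul:
  fixes f h :: "'a \<Rightarrow> real"
  assumes "integrable M f" "h \<in> borel_measurable M" "\<And>x. \<bar>h x\<bar> \<le> C"
  shows "integrable M (\<lambda>x. h x * f x)"
proof (rule Bochner_Integration.integrable_bound[where f="\<lambda>x. C * f x"])
  show "integrable M (\<lambda>x. C * f x)" using assms by simp
  show "(\<lambda>x. h x * f x) \<in> borel_measurable M"
    using assms borel_measurable_integrable by measurable
  have C0: "C \<ge> 0" using assms(3)[of undefined] by linarith
  show "AE x in M. norm (h x * f x) \<le> norm (C * f x)"
  proof (rule AE_I2)
    fix x show "norm (h x * f x) \<le> norm (C * f x)"
      using assms(3)[of x] C0 by (simp add: abs_mult mult_right_mono)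
  qed
qed

context
  fixes \<Omega> :: "(real^2) set"
  assumes op: "open \<Omega>" and bd: "bounded \<Omega>"
begin

lemma sign_bounds:
  fixes \<phi> h :: "real^2 \<Rightarrow> real"
  assumes ip: "integrable (lebesgue_on \<Omega>) \<phi>" and hm: "h \<in> borel_measurable (lebesgue_on \<Omega>)"
    and hb: "\<And>x. A < h x \<and> h x < B" and A0: "0 < A"
    and Sp: "Sp = {x\<in>\<Omega>. \<phi> x > 0}" and Sn: "Sn = {x\<in>\<Omega>. \<phi> x < 0}"
    and Spm: "Sp \<in> sets (lebesgue_on \<Omega>)" and Snm: "Sn \<in> sets (lebesgue_on \<Omega>)"
  shows "A * integral\<^sup>L (lebesgue_on \<Omega>) (\<lambda>x. indicator Sp x * \<phi> x)
          + B * integral\<^sup>L (lebesgue_on \<Omega>) (\<lambda>x. indicator Sn x * \<phi> x)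
         \<le> integral\<^sup>L (lebesgue_on \<Omega>) (\<lambda>x. h x * \<phi> x)"
    "integral\<^sup>L (lebesgue_on \<Omega>) (\<lambda>x. h x * \<phi> x) \<le>
        B * integral\<^sup>L (lebesgue_on \<Omega>) (\<lambda>x. indicator Sp x * \<phi> x)
          + A * integral\<^sup>L (lebesgue_on \<Omega>) (\<lambda>x. indicator Sn x * \<phi> x)"
proof -
  let ?M = "lebesgue_on \<Omega>"
  have sp: "space ?M = \<Omega>" by (simp add: space_restrict_space)
  have ipos: "integrable ?M (\<lambda>x. indicator Sp x * \<phi> x)"
    using integrable_real_mult_indicator[OF Spm ip] by (simp add: mult.commute)
  have ineg: "integrable ?M (\<lambda>x. indicator Sn x * \<phi> x)"
    using integrable_real_mult_indicator[OF Snm ip] by (simp add: mult.commute)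
  have hbd: "\<bar>h x\<bar> \<le> B" for x using hb[of x] A0 by linarith
  have ihp: "integrable ?M (\<lambda>x. h x * \<phi> x)" by (rule bmul[OF ip hm hbd])
  have pw: "h x * \<phi> x = h x * (indicator Sp x * \<phi> x) + h x * (indicator Sn x * \<phi> x)"
    if "x \<in> \<Omega>" for x
    using that unfolding Sp Sn by (auto simp: indicator_def)
  have "integral\<^sup>L ?M (\<lambda>x. A * (indicator Sp x * \<phi> x) + B * (indicator Sn x * \<phi> x))
      \<le> integral\<^sup>L ?M (\<lambda>x. h x * \<phi> x)"
  proof (rule integral_mono)
    show "integrable ?M (\<lambda>x. A * (indicator Sp x * \<phi> x) + B * (indicator Sn x * \<phi> x))"
      using ipos ineg by simp
    show "integrable ?M (\<lambda>x. h x * \<phi> x)" by fact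
    fix x assume "x \<in> space ?M"
    then have x: "x \<in> \<Omega>" using sp by simp
    show "A * (indicator Sp x * \<phi> x) + B * (indicator Sn x * \<phi> x) \<le> h x * \<phi> x"
    proof (cases "\<phi> x > 0")
      case True
      then have "x \<in> Sp" "x \<notin> Sn" using x Sp Sn by auto
      then show ?thesis using True hb[of x] by simp
    next
      case False
      show ?thesis
      proof (cases "\<phi> x < 0")
        case True
        then have "x \<notin> Sp" "x \<in> Sn" using x Sp Sn by auto
        then show ?thesis using True hb[of x] by (simp add: mult_right_mono_neg)
      next
        case False2: False
        then have "\<phi> x = 0" using False by simp
        then show ?thesis by simp
      qed
    qed
  qed
  then show "A * integral\<^sup>L ?M (\<lambda>x. indicator Sp x * \<phi> x)
          + B * integral\<^sup>L ?M (\<lambda>x. indicator Sn x * \<phi> x)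
         \<le> integral\<^sup>L ?M (\<lambda>x. h x * \<phi> x)"
    using ipos ineg by simp
  have "integral\<^sup>L ?M (\<lambda>x. h x * \<phi> x) \<le>
     integral\<^sup>L ?M (\<lambda>x. B * (indicator Sp x * \<phi> x) + A * (indicator Sn x * \<phi> x))"
  proof (rule integral_mono)
    show "integrable ?M (\<lambda>x. B * (indicator Sp x * \<phi> x) + A * (indicator Sn x * \<phi> x))"
      using ipos ineg by simp
    show "integrable ?M (\<lambda>x. h x * \<phi> x)" by fact
    fix x assume "x \<in> space ?M"
    then have x: "x \<in> \<Omega>" using sp by simp
    show "h x * \<phi> x \<le> B * (indicator Sp x * \<phi> x) + A * (indicator Sn x * \<phi> x)"
    proof (cases "\<phi> x > 0")
      case True
      then have "x \<in> Sp" "x \<notin> Sn" using x Sp Sn by auto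
      then show ?thesis using True hb[of x] by simp
    next
      case False
      show ?thesis
      proof (cases "\<phi> x < 0")
        case True
        then have "x \<notin> Sp" "x \<in> Sn" using x Sp Sn by auto
        then show ?thesis using True hb[of x] by (simp add: mult_right_mono_neg)
      next
        case False2: False
        then have "\<phi> x = 0" using False by simp
        then show ?thesis by simp
      qed
    qed
  qed
  then show "integral\<^sup>L ?M (\<lambda>x. h x * \<phi> x) \<le>
        B * integral\<^sup>L ?M (\<lambda>x. indicator Sp x * \<phi> x)
          + A * integral\<^sup>L ?M (\<lambda>x. indicator Sn x * \<phi> x)"
    using ipos ineg by simp
qed

end

theorem proposition4p4:
  fixes \<Omega> :: "(real^2) set" and \<epsilon> lam_j :: real and \<phi>j :: "real^2 \<Rightarrow> real"
  assumes "open \<Omega>" and "bounded \<Omega>" and "connected \<Omega>" and "simply_connected \<Omega>"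
    and "C2eps_boundary \<epsilon> \<Omega>"
    and "dirichlet_eigenpair \<Omega> lam_j \<phi>j"
    and "integral\<^sup>L (lebesgue_on {x\<in>\<Omega>. \<phi>j x > 0}) \<phi>j
         \<noteq> - integral\<^sup>L (lebesgue_on {x\<in>\<Omega>. \<phi>j x < 0}) \<phi>j"
  shows "\<exists>A B. 0 < A \<and> A < B \<and>
           (\<forall>\<theta> :: real \<Rightarrow> real. (\<forall>\<eta>. A < \<theta> \<eta> \<and> \<theta> \<eta> < B) \<longrightarrow>
              \<not> (\<exists>\<phi>. dirichlet_weak_solution \<Omega> (\<lambda>x. lam_j * \<phi> x + \<theta> (\<phi> x)) \<phi>))"
proof -
  note op = assms(1) and bd = assms(2)
  let ?M = "lebesgue_on \<Omega>"
  define Sp where "Sp = {x\<in>\<Omega>. \<phi>j x > 0}"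
  define Sn where "Sn = {x\<in>\<Omega>. \<phi>j x < 0}"
  have eig: "dirichlet_weak_solution \<Omega> (\<lambda>x. lam_j * \<phi>j x) \<phi>j"
    using assms(6) unfolding dirichlet_eigenpair_def by blast
  then have Lphi: "L2_on \<Omega> \<phi>j"
    unfolding dirichlet_weak_solution_def H10_def H1_grad_def by blast
  then have phim[measurable]: "\<phi>j \<in> borel_measurable ?M" unfolding L2_on_def by blast
  have ip: "integrable ?M \<phi>j"
    using Lphi L2_integrable[OF fin_leb_on[OF op bd]] unfolding L2_on_def by blast
  have sp: "space ?M = \<Omega>" by (simp add: space_restrict_space)
  have Om: "\<Omega> \<in> sets lebesgue" using op by (simp add: borel_open)
  have "{x \<in> space ?M. 0 < \<phi>j x} \<in> sets ?M" by measurable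
  then have Spm: "Sp \<in> sets ?M" unfolding Sp_def sp .
  have "{x \<in> space ?M. \<phi>j x < 0} \<in> sets ?M" by measurable
  then have Snm: "Sn \<in> sets ?M" unfolding Sn_def sp .
  have SpL: "Sp \<in> sets lebesgue" using Spm sets_restrict_space_iff[of \<Omega> lebesgue Sp] Om by simp
  have SnL: "Sn \<in> sets lebesgue" using Snm sets_restrict_space_iff[of \<Omega> lebesgue Sn] Om by simp
  define P where "P = integral\<^sup>L ?M (\<lambda>x. indicator Sp x * \<phi>j x)"
  define N where "N = - integral\<^sup>L ?M (\<lambda>x. indicator Sn x * \<phi>j x)"
  have "integral\<^sup>L (lebesgue_on Sp) \<phi>j = P"
    unfolding P_def by (rule restrict_int) (use SpL Om in \<open>auto simp: Sp_def\<close>)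
  moreover have "integral\<^sup>L (lebesgue_on Sn) \<phi>j = - N"
    unfolding N_def by (simp, rule restrict_int) (use SnL Om in \<open>auto simp: Sn_def\<close>)
  ultimately have PN: "P \<noteq> N" using assms(7) unfolding Sp_def Sn_def by simp
  have P0: "P \<ge> 0" unfolding P_def
    by (rule integral_nonneg_AE) (auto simp: indicator_def Sp_def)
  have N0: "N \<ge> 0" unfolding N_def
  proof -
    have "integral\<^sup>L ?M (\<lambda>x. indicator Sn x * \<phi>j x) \<le> integral\<^sup>L ?M (\<lambda>x. 0)"
      by (rule integral_mono_AE') (auto simp: indicator_def Sn_def)
    then show "0 \<le> - integral\<^sup>L ?M (\<lambda>x. indicator Sn x * \<phi>j x)" by simp
  qed
  have key: "integral\<^sup>L ?M (\<lambda>x. \<theta> (u x) * \<phi>j x) = 0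
       \<and> (\<lambda>x. \<theta> (u x)) \<in> borel_measurable ?M"
    if sol: "dirichlet_weak_solution \<Omega> (\<lambda>x. lam_j * u x + \<theta> (u x)) u" for \<theta> u
  proof -
    let ?F = "\<lambda>x. lam_j * u x + \<theta> (u x)"
    have fr: "integral\<^sup>L ?M (\<lambda>x. ?F x * \<phi>j x) = lam_j * integral\<^sup>L ?M (\<lambda>x. \<phi>j x * u x)"
      by (rule fredholm[OF op bd sol eig])
    have LF: "L2_on \<Omega> ?F" using sol unfolding dirichlet_weak_solution_def by blast
    have Lu: "L2_on \<Omega> u"
      using sol unfolding dirichlet_weak_solution_def H10_def H1_grad_def by blast
    have eqf: "(\<lambda>x. \<theta> (u x)) = (\<lambda>x. ?F x - lam_j * u x)" by (simp add: fun_eq_iff)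
    have hm: "(\<lambda>x. \<theta> (u x)) \<in> borel_measurable ?M"
    proof -
      have m1: "?F \<in> borel_measurable ?M" using LF unfolding L2_on_def by blast
      have m2: "u \<in> borel_measurable ?M" using Lu unfolding L2_on_def by blast
      have "(\<lambda>x. ?F x - lam_j * u x) \<in> borel_measurable ?M"
        by (intro borel_measurable_diff m1 borel_measurable_times borel_measurable_const m2)
      then show ?thesis unfolding eqf .
    qed
    have i1: "integrable ?M (\<lambda>x. ?F x * \<phi>j x)"
      using LF Lphi unfolding L2_on_def by (intro L2_prod) auto
    have i2: "integrable ?M (\<lambda>x. \<phi>j x * u x)"
      using Lu Lphi unfolding L2_on_def by (intro L2_prod) auto
    have "integral\<^sup>L ?M (\<lambda>x. \<theta> (u x) * \<phi>j x) =
          integral\<^sup>L ?M (\<lambda>x. ?F x * \<phi>j x - lam_j * (\<phi>j x * u x))"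
      by (rule Bochner_Integration.integral_cong) (auto simp: algebra_simps)
    also have "\<dots> = integral\<^sup>L ?M (\<lambda>x. ?F x * \<phi>j x) - lam_j * integral\<^sup>L ?M (\<lambda>x. \<phi>j x * u x)"
      using i1 i2 by simp
    also have "\<dots> = 0" using fr by simp
    finally show ?thesis using hm by blast
  qed
  have bounds: "A * P - B * N \<le> integral\<^sup>L ?M (\<lambda>x. \<theta> (u x) * \<phi>j x)
      \<and> integral\<^sup>L ?M (\<lambda>x. \<theta> (u x) * \<phi>j x) \<le> B * P - A * N"
    if hm: "(\<lambda>x. \<theta> (u x)) \<in> borel_measurable ?M" and hb: "\<forall>\<eta>. A < \<theta> \<eta> \<and> \<theta> \<eta> < B"
      and A0: "0 < A" for \<theta> u A B
    using sign_bounds[OF op bd ip hm _ A0 Sp_def Sn_def Spm Snm] hb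
    unfolding P_def N_def by auto
  show ?thesis
  proof (cases "N < P")
    case True
    define B where "B = 1 + (P - N) / (P + 1)"
    have B1: "1 < B" and BN: "B * N < P" using arithAB[OF N0 True] unfolding B_def by auto
    show ?thesis
    proof (intro exI conjI allI impI)
      show "(0::real) < 1" by simp
      show "1 < B" by fact
      fix \<theta> :: "real \<Rightarrow> real" assume hb: "\<forall>\<eta>. 1 < \<theta> \<eta> \<and> \<theta> \<eta> < B"
      show "\<not> (\<exists>\<phi>. dirichlet_weak_solution \<Omega> (\<lambda>x. lam_j * \<phi> x + \<theta> (\<phi> x)) \<phi>)"
      proof
        assume "\<exists>\<phi>. dirichlet_weak_solution \<Omega> (\<lambda>x. lam_j * \<phi> x + \<theta> (\<phi> x)) \<phi>"
        then obtain u where "dirichlet_weak_solution \<Omega> (\<lambda>x. lam_j * u x + \<theta> (u x)) u" by blast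
        from key[OF this] have k: "integral\<^sup>L ?M (\<lambda>x. \<theta> (u x) * \<phi>j x) = 0"
          and hm: "(\<lambda>x. \<theta> (u x)) \<in> borel_measurable ?M" by auto
        from bounds[OF hm hb] k have "1 * P - B * N \<le> 0" by simp
        then show False using BN by simp
      qed
    qed
  next
    case False
    then have True: "P < N" using PN by simp
    define B where "B = 1 + (N - P) / (N + 1)"
    have B1: "1 < B" and BN: "B * P < N" using arithAB[OF P0 True] unfolding B_def by auto
    show ?thesis
    proof (intro exI conjI allI impI)
      show "(0::real) < 1" by simp
      show "1 < B" by fact
      fix \<theta> :: "real \<Rightarrow> real" assume hb: "\<forall>\<eta>. 1 < \<theta> \<eta> \<and> \<theta> \<eta> < B"
      show "\<not> (\<exists>\<phi>. dirichlet_weak_solution \<Omega> (\<lambda>x. lam_j * \<phi> x + \<theta> (\<phi> x)) \<phi>)"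
      proof
        assume "\<exists>\<phi>. dirichlet_weak_solution \<Omega> (\<lambda>x. lam_j * \<phi> x + \<theta> (\<phi> x)) \<phi>"
        then obtain u where "dirichlet_weak_solution \<Omega> (\<lambda>x. lam_j * u x + \<theta> (u x)) u" by blast
        from key[OF this] have k: "integral\<^sup>L ?M (\<lambda>x. \<theta> (u x) * \<phi>j x) = 0"
          and hm: "(\<lambda>x. \<theta> (u x)) \<in> borel_measurable ?M" by auto
        from bounds[OF hm hb] k have "0 \<le> B * P - 1 * N" by simp
        then show False using BN by simp
      qed
    qed
  qed
qed

end
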